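(* Let $f\in B(\mathbb T)$, $1\le p<\infty$, and $n\in\mathbb N$. Then $$\|f-\mathcal V_nf\|_{L_p(\mathbb T)}\le C_p\,\widetilde E(f,\mathcal T_n)_{L_p(\mathbb T)},$$ where $C_p$ depends only on $p$.
   Context: $B(\mathbb T)$: real-valued bounded measurable $2\pi$-periodic functions; $\|g\|_{L_p(\mathbb T)}=(\int_0^{2\pi}|g|^p)^{1/p}$. $\mathcal T_n$: real univariate trigonometric polynomials of order at most $n$. $\widetilde E(f,\mathcal T_n)_{L_p(\mathbb T)}=\inf\{\|Q-q\|_{L_p(\mathbb T)}:q,Q\in\mathcal T_n,\ q\le f\le Q\text{ everywhere}\}$. De la Vallée-Poussin interpolation means: $\mathcal V_nf(\phi)=\frac1{3n}\sum_{k=0}^{6n-1}f(t_k)K_n(\phi-t_k)$, $t_k=\frac{\pi k}{3n}$, where $K_n(\phi)=\frac12+\sum_{k=1}^{2n}\cos k\phi+\sum_{k=2n+1}^{4n-1}\frac{4n-k}{2n}\cos k\phi$. *)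

theory Defs
  imports "HOL-Analysis.Analysis"
begin

definition B_T :: "(real \<Rightarrow> real) set" where
  "B_T = {f. f \<in> borel_measurable lborel \<and> bounded (range f) \<and> (\<forall>x. f (x + 2*pi) = f x)}"

definition Lp_norm :: "real \<Rightarrow> (real \<Rightarrow> real) \<Rightarrow> real" where
  "Lp_norm p g = (LINT x:{0..2*pi}|lborel. \<bar>g x\<bar> powr p) powr (1/p)"

definition trig_polys :: "nat \<Rightarrow> (real \<Rightarrow> real) set" where
  "trig_polys n = {q. \<exists>a b :: nat \<Rightarrow> real.
      q = (\<lambda>x. a 0 + (\<Sum>k=1..n. a k * cos (real k * x) + b k * sin (real k * x)))}"

definition one_sided_E :: "real \<Rightarrow> (real \<Rightarrow> real) \<Rightarrow> nat \<Rightarrow> real" where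
  "one_sided_E p f n = Inf {Lp_norm p (\<lambda>x. Q x - q x) | q Q.
      q \<in> trig_polys n \<and> Q \<in> trig_polys n \<and> (\<forall>x. q x \<le> f x \<and> f x \<le> Q x)}"

definition VP_kernel :: "nat \<Rightarrow> real \<Rightarrow> real" where
  "VP_kernel n \<phi> = 1/2 + (\<Sum>k=1..2*n. cos (real k * \<phi>))
     + (\<Sum>k=2*n+1..4*n-1. (real (4*n) - real k) / real (2*n) * cos (real k * \<phi>))"

definition VP_means :: "nat \<Rightarrow> (real \<Rightarrow> real) \<Rightarrow> real \<Rightarrow> real" where
  "VP_means n f \<phi> = 1 / (3 * real n) *
     (\<Sum>k=0..6*n-1. f (pi * real k / (3 * real n)) * VP_kernel n (\<phi> - pi * real k / (3 * real n)))"

end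

theory Submission
  imports Defs
begin


lemma sin_shift_int: "sin (of_int a * (2*pi) + b) = sin b"
proof -
  have "sin (of_int a * (2*pi)) = 0" "cos (of_int a * (2*pi)) = 1"
    using sin_int_2pin[of a] cos_int_2pin[of a] by (simp_all add: mult.commute)
  then show ?thesis by (simp add: sin_add)
qed

lemma LINT_const: "(LINT t:{0..2*pi}|lborel. (c::real)) = 2*pi*c"
  by (subst set_integral_const) auto

lemma LINT_cos_int:
  fixes a :: int
  shows "(LINT t:{0..2*pi}|lborel. cos (of_int a * t + b)) = (if a = 0 then 2*pi*cos b else 0)"
proof (cases "a = 0")
  case True
  then show ?thesis by (simp add: LINT_const)
next
  case False
  have "(LINT t:{0..2*pi}|lborel. cos (of_int a * t + b)) =
     sin (of_int a * (2*pi) + b) / of_int a - sin (of_int a * 0 + b) / of_int a"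
    unfolding set_lebesgue_integral_def
    apply (rule integral_FTC_atLeastAtMost)
    using False
      apply (auto intro!: derivative_eq_intros continuous_intros simp: has_real_derivative_iff_has_vector_derivative[symmetric])
    done
  then show ?thesis using False by (simp add: sin_shift_int)
qed


lemma sin_diff_half: "sin ((y::real) + h/2) - sin (y - h/2) = 2 * sin (h/2) * cos y"
  by (simp add: sin_add sin_diff)

lemma disc_cos_sum:
  fixes N j :: nat
  assumes "0 < N" "j < N"
  shows "(\<Sum>k<N. cos (real j * (2*pi*real k / real N) + b)) = (if j = 0 then real N * cos b else 0)"
proof (cases "j = 0")
  case True then show ?thesis by simp
next
  case False
  define h where "h = 2*pi*real j / real N"
  define F where "F k = sin (real k * h + b - h/2)" for k :: nat
  have hpos: "0 < h/2" "h/2 < pi" using assms False by (auto simp: h_def field_simps)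
  have s: "sin (h/2) \<noteq> 0" using sin_gt_zero[OF hpos] by simp
  have tm: "2 * sin (h/2) * cos (real j * (2*pi*real k / real N) + b) = F (Suc k) - F k" for k
  proof -
    have "real j * (2*pi*real k / real N) + b = real k * h + b" by (simp add: h_def field_simps)
    moreover have "F (Suc k) = sin ((real k * h + b) + h/2)" "F k = sin ((real k * h + b) - h/2)"
      by (simp_all add: F_def algebra_simps)
    ultimately show ?thesis using sin_diff_half[of "real k * h + b" h] by simp
  qed
  have "2 * sin (h/2) * (\<Sum>k<N. cos (real j * (2*pi*real k / real N) + b)) = (\<Sum>k<N. F (Suc k) - F k)"
    unfolding sum_distrib_left using tm by presburger
  also have "\<dots> = F N - F 0" by (rule sum_lessThan_telescope)
  also have "F N = F 0"
  proof -
    have "real N * h + b - h/2 = of_int (int j) * (2*pi) + (b - h/2)" using assms by (simp add: h_def field_simps)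
    then show ?thesis unfolding F_def using sin_shift_int[of "int j" "b - h/2"] by (simp add: algebra_simps)
  qed
  finally show ?thesis using s False by simp
qed


inductive_set tp :: "nat \<Rightarrow> (real \<Rightarrow> real) set" for N :: nat where
  tp0: "(\<lambda>_. 0) \<in> tp N"
| tpc: "f \<in> tp N \<Longrightarrow> j < N \<Longrightarrow> (\<lambda>t. f t + c * cos (real j * t + b)) \<in> tp N"

lemma tp_cos: "j < N \<Longrightarrow> (\<lambda>t. c * cos (real j * t + b)) \<in> tp N"
  using tpc[OF tp0, of j N c b] by simp

lemma tp_add: assumes "f \<in> tp N" "g \<in> tp N" shows "(\<lambda>t. f t + g t) \<in> tp N"
  using assms(2)
proof (induction g rule: tp.induct)
  case tp0 then show ?case using assms(1) by simp
next
  case (tpc g j c b)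
  have "(\<lambda>t. f t + (g t + c * cos (real j * t + b))) = (\<lambda>t. (f t + g t) + c * cos (real j * t + b))"
    by (simp add: algebra_simps)
  then show ?case using tp.tpc[OF tpc(3) tpc(2)] by simp
qed

lemma tp_cmult: "f \<in> tp N \<Longrightarrow> (\<lambda>t. a * f t) \<in> tp N"
proof (induction f rule: tp.induct)
  case tp0 then show ?case by (simp add: tp.tp0)
next
  case (tpc f j c b)
  have "(\<lambda>t. a * (f t + c * cos (real j * t + b))) = (\<lambda>t. a * f t + (a*c) * cos (real j * t + b))"
    by (simp add: algebra_simps)
  then show ?case using tp.tpc[OF tpc(3) tpc(2)] by simp
qed

lemma tp_diff: "f \<in> tp N \<Longrightarrow> g \<in> tp N \<Longrightarrow> (\<lambda>t. f t - g t) \<in> tp N"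
  using tp_add[of f N "\<lambda>t. (-1) * g t"] tp_cmult[of g N "-1"] by simp

lemma tp_mono: "f \<in> tp N \<Longrightarrow> N \<le> M \<Longrightarrow> f \<in> tp M"
proof (induction f rule: tp.induct)
  case tp0 then show ?case by (simp add: tp.tp0)
next
  case (tpc f j c b)
  then show ?case using tp.tpc[of f M j c b] by simp
qed

lemma tp_const: "0 < N \<Longrightarrow> (\<lambda>t. c) \<in> tp N"
  using tp_cos[of 0 N c 0] by simp

lemma tp_sum: "finite A \<Longrightarrow> (\<And>i. i \<in> A \<Longrightarrow> F i \<in> tp N) \<Longrightarrow> (\<lambda>t. \<Sum>i\<in>A. F i t) \<in> tp N"
proof (induction A rule: finite_induct)
  case empty then show ?case by (simp add: tp.tp0)
next
  case (insert x A)
  then show ?case using tp_add[of "F x" N "\<lambda>t. \<Sum>i\<in>A. F i t"] by simp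
qed

lemma tp_cont: "f \<in> tp N \<Longrightarrow> continuous_on A f"
proof (induction f rule: tp.induct)
  case tp0 then show ?case by simp
next
  case (tpc f j c b)
  then show ?case by (intro continuous_on_add continuous_on_mult continuous_on_const continuous_on_cos) (auto intro!: continuous_intros)
qed

lemma tp_cos_cos:
  assumes "j < N" "k < M"
  shows "(\<lambda>t. (c * cos (real j * t + b)) * (d * cos (real k * t + e))) \<in> tp (N + M)"
proof -
  have pr: "cos x * cos y = (cos (x + y) + cos (x - y)) / 2" for x y :: real
    by (simp add: cos_add cos_diff)
  have s: "(\<lambda>t. (c * d / 2) * cos (real (j+k) * t + (b + e))) \<in> tp (N+M)"
    by (rule tp_cos) (use assms in auto)
  have d: "(\<lambda>t. (c * d / 2) * cos ((real j * t + b) - (real k * t + e))) \<in> tp (N+M)"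
  proof (cases "k \<le> j")
    case True
    have "(\<lambda>t. (c * d / 2) * cos ((real j * t + b) - (real k * t + e))) = (\<lambda>t. (c * d / 2) * cos (real (j-k) * t + (b - e)))"
      using True by (simp add: of_nat_diff algebra_simps)
    then show ?thesis using tp_cos[of "j-k" "N+M" "c*d/2" "b-e"] assms by simp
  next
    case False
    have "(\<lambda>t. (c * d / 2) * cos ((real j * t + b) - (real k * t + e))) = (\<lambda>t. (c * d / 2) * cos (real (k-j) * t + (e - b)))"
      using False by (subst cos_minus[symmetric]) (simp add: of_nat_diff algebra_simps)
    then show ?thesis using tp_cos[of "k-j" "N+M" "c*d/2" "e-b"] assms by simp
  qed
  have "(\<lambda>t. (c * cos (real j * t + b)) * (d * cos (real k * t + e))) =
    (\<lambda>t. (c * d / 2) * cos (real (j+k) * t + (b + e)) + (c * d / 2) * cos ((real j * t + b) - (real k * t + e)))"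
    by (auto simp: pr algebra_simps add_divide_distrib)
  then show ?thesis using tp_add[OF s d] by simp
qed

lemma tp_mult_cos: "g \<in> tp M \<Longrightarrow> j < N \<Longrightarrow> (\<lambda>t. (c * cos (real j * t + b)) * g t) \<in> tp (N+M)"
proof (induction g rule: tp.induct)
  case tp0 then show ?case by (simp add: tp.tp0)
next
  case (tpc g k d e)
  have "(\<lambda>t. (c * cos (real j * t + b)) * (g t + d * cos (real k * t + e))) =
     (\<lambda>t. (c * cos (real j * t + b)) * g t + (c * cos (real j * t + b)) * (d * cos (real k * t + e)))"
    by (simp add: algebra_simps)
  then show ?case using tp_add[OF tpc(3)[OF tpc(4)] tp_cos_cos[OF tpc(4) tpc(2)]] by simp
qed

lemma tp_mult: "f \<in> tp N \<Longrightarrow> g \<in> tp M \<Longrightarrow> (\<lambda>t. f t * g t) \<in> tp (N+M)"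
proof (induction f rule: tp.induct)
  case tp0 then show ?case by (simp add: tp.tp0)
next
  case (tpc f j c b)
  have "(\<lambda>t. (f t + c * cos (real j * t + b)) * g t) = (\<lambda>t. f t * g t + (c * cos (real j * t + b)) * g t)"
    by (simp add: algebra_simps)
  then show ?case using tp_add[OF tpc(3)[OF tpc(4)] tp_mult_cos[OF tpc(4) tpc(2)]] by simp
qed

lemma cont_si: "continuous_on {0..2*pi} (f::real\<Rightarrow>real) \<Longrightarrow> set_integrable lborel {0..2*pi} f"
  using borel_integrable_atLeastAtMost'[of 0 "2*pi" f] by simp

lemma tp_si: "f \<in> tp N \<Longrightarrow> set_integrable lborel {0..2*pi} f"
  by (rule cont_si, rule tp_cont)

lemma quadrature:
  assumes "f \<in> tp N" "N \<le> M" "0 < M"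
  shows "(2*pi / real M) * (\<Sum>k<M. f (2*pi*real k / real M)) = (LINT t:{0..2*pi}|lborel. f t)"
  using assms
proof (induction f rule: tp.induct)
  case tp0 then show ?case by simp
next
  case (tpc f j c b)
  have jM: "j < M" using tpc by simp
  have i1: "set_integrable lborel {0..2*pi} f" by (rule tp_si[OF tpc(1)])
  have i2: "set_integrable lborel {0..2*pi} (\<lambda>t. c * cos (real j * t + b))"
    by (rule tp_si[OF tp_cos[OF tpc(2)]])
  have "(LINT t:{0..2*pi}|lborel. f t + c * cos (real j * t + b)) =
     (LINT t:{0..2*pi}|lborel. f t) + (LINT t:{0..2*pi}|lborel. c * cos (real j * t + b))"
    by (rule set_integral_add[OF i1 i2])
  also have "(LINT t:{0..2*pi}|lborel. c * cos (real j * t + b)) = c * (if j = 0 then 2*pi*cos b else 0)"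
    using LINT_cos_int[of "int j" b] by simp
  finally have L: "(LINT t:{0..2*pi}|lborel. f t + c * cos (real j * t + b)) =
      (LINT t:{0..2*pi}|lborel. f t) + c * (if j = 0 then 2*pi*cos b else 0)" .
  have D: "(\<Sum>k<M. c * cos (real j * (2*pi*real k / real M) + b)) = c * (if j = 0 then real M * cos b else 0)"
    using disc_cos_sum[OF tpc(5) jM, of b] by (simp add: sum_distrib_left[symmetric])
  show ?case
    using tpc(3)[OF tpc(4) tpc(5)] L D tpc(5)
    by (simp add: sum.distrib distrib_left)
qed


lemma LINT_sum:
  assumes "finite A" "\<And>i. i \<in> A \<Longrightarrow> set_integrable lborel {0..2*pi} (F i :: real \<Rightarrow> real)"
  shows "(LINT t:{0..2*pi}|lborel. (\<Sum>i\<in>A. F i t)) = (\<Sum>i\<in>A. LINT t:{0..2*pi}|lborel. F i t)"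
    and "set_integrable lborel {0..2*pi} (\<lambda>t. \<Sum>i\<in>A. F i t)"
  using assms
proof (induction A rule: finite_induct)
  case empty
  { case 1 show ?case by simp }
  { case 2 show ?case by (simp add: set_integrable_def) }
next
  case (insert x A)
  { case 1
    have "set_integrable lborel {0..2*pi} (\<lambda>t. \<Sum>i\<in>A. F i t)" using insert 1 by auto
    then show ?case using insert 1 by (simp add: set_integral_add) }
  { case 2
    have "set_integrable lborel {0..2*pi} (\<lambda>t. \<Sum>i\<in>A. F i t)" using insert 2 by auto
    then show ?case using insert 2 by (simp add: set_integral_add) }
qed

definition Fj :: "nat \<Rightarrow> real \<Rightarrow> real" where
  "Fj m x = 1/2 + (\<Sum>k=1..m. (1 - real k / real m) * cos (real k * x))"

lemma sumcos_reindex: "(\<Sum>j<m. cos ((real m - real j) * x)) = (\<Sum>k=1..m. cos (real k * x))"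
  by (rule sum.reindex_bij_witness[of _ "\<lambda>k. m - k" "\<lambda>j. m - j"]) (auto simp: of_nat_diff)

lemma fejer_sq:
  "(\<Sum>j<m. cos (real j * x))^2 + (\<Sum>j<m. sin (real j * x))^2
     = real m + 2 * (\<Sum>k=1..m. (real m - real k) * cos (real k * x))"
proof (induction m)
  case 0 then show ?case by simp
next
  case (Suc m)
  define A where "A = (\<Sum>j<m. cos (real j * x))"
  define B where "B = (\<Sum>j<m. sin (real j * x))"
  have cross: "A * cos (real m * x) + B * sin (real m * x) = (\<Sum>k=1..m. cos (real k * x))"
  proof -
    have "A * cos (real m * x) + B * sin (real m * x) = (\<Sum>j<m. cos ((real m - real j) * x))"
      unfolding A_def B_def sum_distrib_right sum.distrib[symmetric]
      by (rule sum.cong) (auto simp: cos_diff left_diff_distrib)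
    then show ?thesis using sumcos_reindex by simp
  qed
  have R: "(\<Sum>k=1..Suc m. (real (Suc m) - real k) * cos (real k * x)) =
     (\<Sum>k=1..m. (real m - real k) * cos (real k * x)) + (\<Sum>k=1..m. cos (real k * x))"
    by (simp add: sum.distrib[symmetric] algebra_simps)
  have "(\<Sum>j<Suc m. cos (real j * x))^2 + (\<Sum>j<Suc m. sin (real j * x))^2
      = (A^2 + B^2) + 2 * (A * cos (real m * x) + B * sin (real m * x)) + ((cos (real m * x))^2 + (sin (real m * x))^2)"
    by (simp add: A_def B_def power2_eq_square algebra_simps)
  also have "\<dots> = real m + 2 * (\<Sum>k=1..m. (real m - real k) * cos (real k * x)) + 2 * (\<Sum>k=1..m. cos (real k * x)) + 1"
    using Suc cross by (simp add: A_def B_def)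
  finally show ?case using R by (simp add: algebra_simps)
qed

lemma Fj_nonneg: assumes "0 < m" shows "0 \<le> Fj m x"
proof -
  have "2 * real m * Fj m x = real m + 2 * (\<Sum>k=1..m. (real m - real k) * cos (real k * x))"
    using assms unfolding Fj_def by (simp add: algebra_simps sum_distrib_left diff_divide_distrib)
  also have "\<dots> \<ge> 0" using fejer_sq[where m=m and x=x, symmetric] by simp
  finally show ?thesis using assms by (simp add: zero_le_mult_iff)
qed

lemma Fj_even: "Fj m (-x) = Fj m x"
  unfolding Fj_def by simp

lemma Fj_shift_tp: "(\<lambda>t. Fj m (t + c)) \<in> tp (m+1)"
proof -
  have "(\<lambda>t. 1/2 + (\<Sum>k\<in>{1..m}. (1 - real k / real m) * cos (real k * t + real k * c))) \<in> tp (m+1)"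
    by (rule tp_add[OF tp_const tp_sum]) (auto intro!: tp_cos)
  then show ?thesis unfolding Fj_def by (simp add: distrib_left)
qed

lemma LINT_cos_nat: "(LINT t:{0..2*pi}|lborel. cos (real k * t + b)) = (if k = 0 then 2*pi*cos b else 0)"
  using LINT_cos_int[of "int k" b] by simp

lemma LINT_cos_nat_pos: "0 < k \<Longrightarrow> (LINT t:{0..2*pi}|lborel. c * cos (real k * t + b)) = 0"
  using LINT_cos_int[of "int k" b] by simp

lemma Fj_int: "(LINT t:{0..2*pi}|lborel. Fj m (t + c)) = pi"
proof -
  have si: "set_integrable lborel {0..2*pi} (\<lambda>t. (1 - real k / real m) * cos (real k * t + real k * c))" for k
    by (rule tp_si[OF tp_cos[of k "k+1"]]) simp
  have "(LINT t:{0..2*pi}|lborel. Fj m (t + c)) =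
     (LINT t:{0..2*pi}|lborel. 1/2 + (\<Sum>k\<in>{1..m}. (1 - real k / real m) * cos (real k * t + real k * c)))"
    unfolding Fj_def by (simp add: distrib_left)
  also have "\<dots> = (LINT t:{0..2*pi}|lborel. (1/2::real)) + (LINT t:{0..2*pi}|lborel. (\<Sum>k\<in>{1..m}. (1 - real k / real m) * cos (real k * t + real k * c)))"
    by (rule set_integral_add(2)[OF tp_si[OF tp_const[of 1]] LINT_sum(2)]) (auto intro: si)
  also have "(LINT t:{0..2*pi}|lborel. (\<Sum>k\<in>{1..m}. (1 - real k / real m) * cos (real k * t + real k * c))) = 0"
    by (subst LINT_sum(1)) (auto intro!: si sum.neutral simp: LINT_cos_nat)
  finally show ?thesis by (simp add: LINT_const)
qed

lemma K_eq: assumes "1 \<le> n" shows "VP_kernel n x = 2 * Fj (4*n) x - Fj (2*n) x"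
proof -
  let ?c = "\<lambda>k. cos (real k * x)"
  have s1: "(\<Sum>k=1..4*n. (1 - real k / real (4*n)) * ?c k) =
      (\<Sum>k=1..2*n. (1 - real k / real (4*n)) * ?c k) + (\<Sum>k=2*n+1..4*n. (1 - real k / real (4*n)) * ?c k)"
  proof -
    have e: "4*n = 2*n + 2*n" by simp
    show ?thesis
      by (subst (1 2) e, rule sum.ub_add_nat) simp
  qed
  have s2: "(\<Sum>k=2*n+1..4*n. (1 - real k / real (4*n)) * ?c k) = (\<Sum>k=2*n+1..4*n-1. (1 - real k / real (4*n)) * ?c k)"
  proof -
    have e: "4*n = Suc (4*n-1)" using assms by simp
    show ?thesis using assms by (subst e, subst sum.cl_ivl_Suc, subst e[symmetric]) (simp add: e[symmetric])
  qed
  have "2 * Fj (4*n) x - Fj (2*n) x = 1/2 + (\<Sum>k=1..2*n. (2*(1 - real k / real (4*n)) - (1 - real k / real (2*n))) * ?c k)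
      + (\<Sum>k=2*n+1..4*n-1. 2*(1 - real k / real (4*n)) * ?c k)"
    unfolding Fj_def s1 s2 by (simp add: sum_distrib_left sum_subtractf[symmetric] sum.distrib[symmetric] algebra_simps)
  also have "(\<Sum>k=1..2*n. (2*(1 - real k / real (4*n)) - (1 - real k / real (2*n))) * ?c k) = (\<Sum>k=1..2*n. ?c k)"
    using assms by (intro sum.cong) (auto simp: field_simps)
  also have "(\<Sum>k=2*n+1..4*n-1. 2*(1 - real k / real (4*n)) * ?c k) = (\<Sum>k=2*n+1..4*n-1. (real (4*n) - real k) / real (2*n) * ?c k)"
    using assms by (intro sum.cong) (auto simp: field_simps)
  finally show ?thesis unfolding VP_kernel_def by simp
qed

lemma K_bound: assumes "1 \<le> n" shows "\<bar>VP_kernel n x\<bar> \<le> 2 * Fj (4*n) x + Fj (2*n) x"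
  using K_eq[OF assms, of x] Fj_nonneg[of "4*n" x] Fj_nonneg[of "2*n" x] assms by auto



lemma prod_int:
  assumes "1 \<le> k"
  shows "(LINT t:{0..2*pi}|lborel. cos (real m * t + b) * cos (real k * (\<phi> - t))) =
     (if m = k then pi * cos (real m * \<phi> + b) else 0)"
proof -
  have pw: "cos (real m * t + b) * cos (real k * (\<phi> - t)) =
     (1/2) * cos (of_int (int m - int k) * t + (b + real k * \<phi>)) + (1/2) * cos (of_int (int (m + k)) * t + (b - real k * \<phi>))" for t
  proof -
    have "cos (real m * t + b) * cos (real k * (\<phi> - t)) =
      (cos ((real m * t + b) + real k * (\<phi> - t)) + cos ((real m * t + b) - real k * (\<phi> - t))) / 2"
      by (simp add: cos_add cos_diff)
    moreover have "(real m * t + b) + real k * (\<phi> - t) = of_int (int m - int k) * t + (b + real k * \<phi>)"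
      by (simp add: algebra_simps)
    moreover have "(real m * t + b) - real k * (\<phi> - t) = of_int (int (m + k)) * t + (b - real k * \<phi>)"
      by (simp add: algebra_simps)
    ultimately show ?thesis by simp
  qed
  have i1: "set_integrable lborel {0..2*pi} (\<lambda>t. (1/2) * cos (of_int (int m - int k) * t + (b + real k * \<phi>)))"
    by (intro cont_si continuous_intros)
  have i2: "set_integrable lborel {0..2*pi} (\<lambda>t. (1/2) * cos (of_int (int (m + k)) * t + (b - real k * \<phi>)))"
    by (intro cont_si continuous_intros)
  have "(LINT t:{0..2*pi}|lborel. cos (real m * t + b) * cos (real k * (\<phi> - t))) =
     (LINT t:{0..2*pi}|lborel. (1/2) * cos (of_int (int m - int k) * t + (b + real k * \<phi>)) + (1/2) * cos (of_int (int (m + k)) * t + (b - real k * \<phi>)))"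
    by (simp only: pw)
  also have "\<dots> = (1/2) * (LINT t:{0..2*pi}|lborel. cos (of_int (int m - int k) * t + (b + real k * \<phi>)))
     + (1/2) * (LINT t:{0..2*pi}|lborel. cos (of_int (int (m + k)) * t + (b - real k * \<phi>)))"
    using set_integral_add(2)[OF i1 i2] by simp
  also have "\<dots> = (if m = k then pi * cos (real m * \<phi> + b) else 0)"
    using assms by (simp only: LINT_cos_int) (auto simp: algebra_simps)
  finally show ?thesis .
qed

lemma VP_even: "VP_kernel n (-x) = VP_kernel n x"
  unfolding VP_kernel_def by simp

lemma VP_shift_tp: assumes "1 \<le> n" shows "(\<lambda>t. VP_kernel n (t + c)) \<in> tp (4*n)"
proof -
  have "(\<lambda>t. (1/2 + (\<Sum>k\<in>{1..2*n}. 1 * cos (real k * t + real k * c)))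
       + (\<Sum>k\<in>{2*n+1..4*n-1}. (real (4*n) - real k) / real (2*n) * cos (real k * t + real k * c))) \<in> tp (4*n)"
    using assms by (intro tp_add tp_const tp_sum tp_cos) auto
  then show ?thesis unfolding VP_kernel_def by (simp add: distrib_left)
qed

lemma VP_diff_tp: assumes "1 \<le> n" shows "(\<lambda>t. VP_kernel n (\<phi> - t)) \<in> tp (4*n)"
proof -
  have "VP_kernel n (\<phi> - t) = VP_kernel n (t + (-\<phi>))" for t
    using VP_even[of n "\<phi> - t"] by simp
  then show ?thesis using VP_shift_tp[OF assms, of "-\<phi>"] by simp
qed

lemma repro_base:
  assumes "1 \<le> n" "m \<le> 2*n"
  shows "(LINT t:{0..2*pi}|lborel. (c * cos (real m * t + b)) * VP_kernel n (\<phi> - t)) = pi * (c * cos (real m * \<phi> + b))"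
proof -
  let ?w = "\<lambda>k. (real (4*n) - real k) / real (2*n)"
  let ?g = "\<lambda>k t. cos (real m * t + b) * cos (real k * (\<phi> - t))"
  have ig: "set_integrable lborel {0..2*pi} (?g k)" for k
    by (intro cont_si continuous_intros)
  have e: "(c * cos (real m * t + b)) * VP_kernel n (\<phi> - t) =
     (c/2) * cos (real m * t + b) + (c * (\<Sum>k\<in>{1..2*n}. ?g k t) + (\<Sum>k\<in>{2*n+1..4*n-1}. (c * ?w k) * ?g k t))" for t
    unfolding VP_kernel_def by (simp add: algebra_simps sum_distrib_left)
  have i0: "set_integrable lborel {0..2*pi} (\<lambda>t. (c/2) * cos (real m * t + b))"
    by (intro cont_si continuous_intros)
  have is1: "set_integrable lborel {0..2*pi} (\<lambda>t. \<Sum>k\<in>{1..2*n}. ?g k t)"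
    by (rule LINT_sum(2)) (auto intro: ig)
  have is2: "set_integrable lborel {0..2*pi} (\<lambda>t. \<Sum>k\<in>{2*n+1..4*n-1}. (c * ?w k) * ?g k t)"
    by (intro cont_si continuous_intros)
  have I1: "(LINT t:{0..2*pi}|lborel. \<Sum>k\<in>{1..2*n}. ?g k t) = (if 1 \<le> m then pi * cos (real m * \<phi> + b) else 0)"
  proof -
    have "(LINT t:{0..2*pi}|lborel. \<Sum>k\<in>{1..2*n}. ?g k t) = (\<Sum>k\<in>{1..2*n}. if m = k then pi * cos (real m * \<phi> + b) else 0)"
      by (subst LINT_sum(1)) (auto intro: ig intro!: sum.cong simp: prod_int)
    also have "\<dots> = (if 1 \<le> m then pi * cos (real m * \<phi> + b) else 0)"
      using assms by (simp add: sum.delta)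
    finally show ?thesis .
  qed
  have I2: "(LINT t:{0..2*pi}|lborel. \<Sum>k\<in>{2*n+1..4*n-1}. (c * ?w k) * ?g k t) = 0"
    using assms by (subst LINT_sum(1)) (auto intro: ig intro!: sum.neutral simp: prod_int)
  have I0: "(LINT t:{0..2*pi}|lborel. (c/2) * cos (real m * t + b)) = (if m = 0 then c * pi * cos b else 0)"
    by (simp add: LINT_cos_nat)
  have "(LINT t:{0..2*pi}|lborel. (c * cos (real m * t + b)) * VP_kernel n (\<phi> - t)) =
     (LINT t:{0..2*pi}|lborel. (c/2) * cos (real m * t + b) + (c * (\<Sum>k\<in>{1..2*n}. ?g k t) + (\<Sum>k\<in>{2*n+1..4*n-1}. (c * ?w k) * ?g k t)))"
    by (simp only: e)
  also have "\<dots> = (LINT t:{0..2*pi}|lborel. (c/2) * cos (real m * t + b)) +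
      (c * (LINT t:{0..2*pi}|lborel. \<Sum>k\<in>{1..2*n}. ?g k t) + (LINT t:{0..2*pi}|lborel. \<Sum>k\<in>{2*n+1..4*n-1}. (c * ?w k) * ?g k t))"
    using i0 is1 is2 by (simp add: set_integral_add)
  also have "\<dots> = pi * (c * cos (real m * \<phi> + b))"
    unfolding I0 I1 I2 by auto
  finally show ?thesis .
qed

lemma repro:
  assumes "q \<in> tp M" "M \<le> 2*n+1" "1 \<le> n"
  shows "(LINT t:{0..2*pi}|lborel. q t * VP_kernel n (\<phi> - t)) = pi * q \<phi>"
  using assms
proof (induction q rule: tp.induct)
  case tp0 then show ?case by simp
next
  case (tpc f j c b)
  have i1: "set_integrable lborel {0..2*pi} (\<lambda>t. f t * VP_kernel n (\<phi> - t))"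
    by (rule tp_si[OF tp_mult[OF tpc(1) VP_diff_tp[OF tpc(5)]]])
  have i2: "set_integrable lborel {0..2*pi} (\<lambda>t. (c * cos (real j * t + b)) * VP_kernel n (\<phi> - t))"
    by (rule tp_si[OF tp_mult[OF tp_cos[OF tpc(2)] VP_diff_tp[OF tpc(5)]]])
  have "(LINT t:{0..2*pi}|lborel. (f t + c * cos (real j * t + b)) * VP_kernel n (\<phi> - t)) =
    (LINT t:{0..2*pi}|lborel. f t * VP_kernel n (\<phi> - t)) + (LINT t:{0..2*pi}|lborel. (c * cos (real j * t + b)) * VP_kernel n (\<phi> - t))"
    using set_integral_add(2)[OF i1 i2] by (simp add: distrib_right)
  also have "\<dots> = pi * f \<phi> + pi * (c * cos (real j * \<phi> + b))"
    using tpc repro_base[of n j c b \<phi>] by simp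
  finally show ?case by (simp add: distrib_left)
qed

lemma sum_nodes: assumes "1 \<le> n"
  shows "(\<Sum>k=0..6*n-1. F (pi * real k / (3 * real n))) = (\<Sum>k<6*n. F (2*pi*real k / real (6*n)))"
proof -
  have "{0..6*n-1} = {..<6*n}" using assms by auto
  moreover have "pi * real k / (3 * real n) = 2*pi*real k / real (6*n)" for k by simp
  ultimately show ?thesis by simp
qed

lemma VP_reproduces:
  assumes "q \<in> tp (n+1)" "1 \<le> n"
  shows "VP_means n q \<phi> = q \<phi>"
proof -
  have h: "(\<lambda>t. q t * VP_kernel n (\<phi> - t)) \<in> tp ((n+1) + 4*n)"
    by (rule tp_mult[OF assms(1) VP_diff_tp[OF assms(2)]])
  have "VP_means n q \<phi> = 1 / (3 * real n) * (\<Sum>k<6*n. q (2*pi*real k / real (6*n)) * VP_kernel n (\<phi> - 2*pi*real k / real (6*n)))"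
    unfolding VP_means_def using sum_nodes[OF assms(2), of "\<lambda>t. q t * VP_kernel n (\<phi> - t)"] by simp
  also have "\<dots> = (1/pi) * ((2*pi / real (6*n)) * (\<Sum>k<6*n. q (2*pi*real k / real (6*n)) * VP_kernel n (\<phi> - 2*pi*real k / real (6*n))))"
    by simp
  also have "\<dots> = (1/pi) * (LINT t:{0..2*pi}|lborel. q t * VP_kernel n (\<phi> - t))"
    using quadrature[OF h, of "6*n"] assms by simp
  also have "\<dots> = q \<phi>" using repro[OF assms(1) _ assms(2)] by simp
  finally show ?thesis .
qed



lemma tangent_powr:
  fixes x a p :: real
  assumes "0 \<le> x" "0 \<le> a" "1 \<le> p"
  shows "p * a powr (p-1) * x \<le> x powr p + (p-1) * a powr p"
proof (cases "a = 0")
  case True then show ?thesis using assms by simp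
next
  case a: False
  show ?thesis
  proof (cases "p = 1")
    case True then show ?thesis using assms a by simp
  next
    case False
    define q where "q = p / (p-1)"
    have p1: "p > 1" using assms False by simp
    have q1: "q > 1" using p1 by (simp add: q_def field_simps)
    have pq: "1/p + 1/q = 1" using p1 by (simp add: q_def field_simps)
    have "x * a powr (p-1) \<le> x powr p / p + (a powr (p-1)) powr q / q"
      by (rule Youngs_inequality[OF p1 q1 pq assms(1)]) simp
    also have "(a powr (p-1)) powr q = a powr p"
      using p1 by (simp add: powr_powr q_def)
    finally have "x * a powr (p-1) \<le> x powr p / p + a powr p / q" .
    then have "p * (x * a powr (p-1)) \<le> p * (x powr p / p + a powr p / q)"
      using p1 by (simp add: mult_left_mono)
    also have "\<dots> = x powr p + (p-1) * a powr p" using p1 by (simp add: q_def field_simps)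
    finally show ?thesis by (simp add: algebra_simps)
  qed
qed

lemma powr_p_split:
  fixes a p :: real assumes "0 \<le> a" "1 \<le> p"
  shows "a powr (p-1) * a = a powr p"
proof (cases "a = 0")
  case True then show ?thesis using assms by simp
next
  case False
  then show ?thesis using powr_add[of a "p-1" 1] assms by simp
qed

lemma jensen_sum:
  fixes w x :: "'i \<Rightarrow> real" and p :: real
  assumes fin: "finite A" and w: "\<And>i. i \<in> A \<Longrightarrow> 0 \<le> w i" and x: "\<And>i. i \<in> A \<Longrightarrow> 0 \<le> x i"
    and W: "(\<Sum>i\<in>A. w i) = W" "0 < W" and p: "1 \<le> p"
  shows "(\<Sum>i\<in>A. w i * x i) powr p \<le> W powr (p-1) * (\<Sum>i\<in>A. w i * x i powr p)"
proof -
  define a where "a = (\<Sum>i\<in>A. w i * x i) / W"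
  have a0: "0 \<le> a" unfolding a_def using w x W by (auto intro!: sum_nonneg divide_nonneg_pos)
  have s: "(\<Sum>i\<in>A. w i * x i) = a * W" using W by (simp add: a_def)
  have "(\<Sum>i\<in>A. w i * (p * a powr (p-1) * x i - (p-1) * a powr p)) \<le> (\<Sum>i\<in>A. w i * x i powr p)"
  proof (intro sum_mono mult_left_mono)
    fix i assume i: "i \<in> A"
    show "0 \<le> w i" using w[OF i] .
    show "p * a powr (p-1) * x i - (p-1) * a powr p \<le> x i powr p"
      using tangent_powr[OF x[OF i] a0 p] by linarith
  qed
  moreover have "(\<Sum>i\<in>A. w i * (p * a powr (p-1) * x i - (p-1) * a powr p)) =
      p * a powr (p-1) * (\<Sum>i\<in>A. w i * x i) - (p-1) * a powr p * W"
  proof -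
    have "(\<Sum>i\<in>A. w i * (p * a powr (p-1) * x i - (p-1) * a powr p)) =
       (\<Sum>i\<in>A. (p * a powr (p-1)) * (w i * x i) - ((p-1) * a powr p) * w i)"
      by (rule sum.cong) (auto simp: algebra_simps)
    also have "\<dots> = (p * a powr (p-1)) * (\<Sum>i\<in>A. w i * x i) - ((p-1) * a powr p) * (\<Sum>i\<in>A. w i)"
      by (simp add: sum_subtractf sum_distrib_left)
    finally show ?thesis using W by simp
  qed
  moreover have "p * a powr (p-1) * (\<Sum>i\<in>A. w i * x i) - (p-1) * a powr p * W = a powr p * W"
    unfolding s using powr_p_split[OF a0 p] by (simp add: algebra_simps)
  ultimately have key: "a powr p * W \<le> (\<Sum>i\<in>A. w i * x i powr p)" by simp
  have "(\<Sum>i\<in>A. w i * x i) powr p = a powr p * W powr (p-1) * W"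
    unfolding s using powr_mult[of a W p] powr_p_split[of W p] W a0 p by (simp add: mult.assoc)
  also have "\<dots> = W powr (p-1) * (a powr p * W)" by simp
  also have "\<dots> \<le> W powr (p-1) * (\<Sum>i\<in>A. w i * x i powr p)"
    using key by (simp add: mult_left_mono)
  finally show ?thesis .
qed

abbreviation II :: "(real \<Rightarrow> real) \<Rightarrow> real" where
  "II h \<equiv> (LINT t:{0..2*pi}|lborel. h t)"

lemma jensen_int:
  fixes w x :: "real \<Rightarrow> real" and p :: real
  assumes w: "\<And>t. t \<in> {0..2*pi} \<Longrightarrow> 0 \<le> w t" and x: "\<And>t. t \<in> {0..2*pi} \<Longrightarrow> 0 \<le> x t"
    and iw: "set_integrable lborel {0..2*pi} w"
    and ixw: "set_integrable lborel {0..2*pi} (\<lambda>t. w t * x t)"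
    and ixpw: "set_integrable lborel {0..2*pi} (\<lambda>t. w t * x t powr p)"
    and W: "II w = W" "0 < W" and p: "1 \<le> p"
  shows "(II (\<lambda>t. w t * x t)) powr p \<le> W powr (p-1) * II (\<lambda>t. w t * x t powr p)"
proof -
  define a where "a = II (\<lambda>t. w t * x t) / W"
  have "II (\<lambda>t. 0) \<le> II (\<lambda>t. w t * x t)"
    by (rule set_integral_mono) (use ixw w x in \<open>auto simp: set_integrable_def\<close>)
  then have a0: "0 \<le> a" unfolding a_def using W by simp
  have s: "II (\<lambda>t. w t * x t) = a * W" using W by (simp add: a_def)
  have i3: "set_integrable lborel {0..2*pi} (\<lambda>t. (p * a powr (p-1)) * (w t * x t) - ((p-1) * a powr p) * w t)"
    using ixw iw by (intro set_integral_diff(1) set_integrable_mult_right) auto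
  have "II (\<lambda>t. (p * a powr (p-1)) * (w t * x t) - ((p-1) * a powr p) * w t) \<le> II (\<lambda>t. w t * x t powr p)"
  proof (rule set_integral_mono[OF i3 ixpw])
    fix t assume t: "t \<in> {0..2*pi}"
    have "w t * (p * a powr (p-1) * x t) \<le> w t * (x t powr p + (p-1) * a powr p)"
      by (rule mult_left_mono[OF tangent_powr[OF x[OF t] a0 p] w[OF t]])
    then show "(p * a powr (p-1)) * (w t * x t) - ((p-1) * a powr p) * w t \<le> w t * x t powr p"
      by (simp add: algebra_simps)
  qed
  moreover have "II (\<lambda>t. (p * a powr (p-1)) * (w t * x t) - ((p-1) * a powr p) * w t) =
      (p * a powr (p-1)) * II (\<lambda>t. w t * x t) - ((p-1) * a powr p) * W"
    using ixw iw W by (subst set_integral_diff(2)) auto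
  moreover have "(p * a powr (p-1)) * II (\<lambda>t. w t * x t) - ((p-1) * a powr p) * W = a powr p * W"
    unfolding s using powr_p_split[OF a0 p] by (simp add: algebra_simps)
  ultimately have key: "a powr p * W \<le> II (\<lambda>t. w t * x t powr p)" by simp
  have "II (\<lambda>t. w t * x t) powr p = a powr p * W powr (p-1) * W"
    unfolding s using powr_mult[of a W p] powr_p_split[of W p] W a0 p by (simp add: mult.assoc)
  also have "\<dots> = W powr (p-1) * (a powr p * W)" by simp
  also have "\<dots> \<le> W powr (p-1) * II (\<lambda>t. w t * x t powr p)"
    using key by (simp add: mult_left_mono)
  finally show ?thesis .
qed



lemma si_dom:
  assumes "h \<in> borel_measurable borel" "continuous_on {0..2*pi} u" "\<And>x. x \<in> {0..2*pi} \<Longrightarrow> \<bar>h x\<bar> \<le> u x"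
  shows "set_integrable lborel {0..2*pi} (h :: real \<Rightarrow> real)"
proof (rule set_integrable_bound[OF cont_si[OF assms(2)]])
  show "set_borel_measurable lborel {0..2*pi} h"
    unfolding set_borel_measurable_def using assms(1) by measurable
  show "AE x in lborel. x \<in> {0..2*pi} \<longrightarrow> norm (h x) \<le> norm (u x)"
    using assms(3) by (auto intro!: AE_I2) (smt (verit))
qed

definition GG :: "nat \<Rightarrow> real \<Rightarrow> real" where
  "GG n x = 2 * Fj (4*n) x + Fj (2*n) x"

lemma GG_nonneg: "1 \<le> n \<Longrightarrow> 0 \<le> GG n x"
  unfolding GG_def using Fj_nonneg[of "4*n" x] Fj_nonneg[of "2*n" x] by simp

lemma GG_even: "GG n (-x) = GG n x"
  unfolding GG_def by (simp add: Fj_even)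

lemma GG_tp: "(\<lambda>t. GG n (t + c)) \<in> tp (4*n+1)"
proof -
  have "(\<lambda>t. 2 * Fj (4*n) (t + c) + Fj (2*n) (t + c)) \<in> tp (4*n+1)"
    by (intro tp_add tp_cmult Fj_shift_tp tp_mono[OF Fj_shift_tp]) auto
  then show ?thesis unfolding GG_def .
qed

lemma GG_int: "II (\<lambda>t. GG n (t + c)) = 3 * pi"
proof -
  have "II (\<lambda>t. GG n (t + c)) = II (\<lambda>t. 2 * Fj (4*n) (t + c)) + II (\<lambda>t. Fj (2*n) (t + c))"
    unfolding GG_def by (rule set_integral_add(2)) (rule tp_si, rule tp_cmult[OF Fj_shift_tp], rule tp_si[OF Fj_shift_tp])
  then show ?thesis by (simp add: Fj_int)
qed

lemma GG_int2: "II (\<lambda>t. GG n (t - c)) = 3 * pi"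
  using GG_int[of n "-c"] by simp

lemma GG_int3: "II (\<lambda>t. GG n (c - t)) = 3 * pi"
proof -
  have "GG n (c - t) = GG n (t - c)" for t using GG_even[of n "t - c"] by simp
  then show ?thesis using GG_int2 by simp
qed

lemma GG_disc: assumes "1 \<le> n"
  shows "(\<Sum>k<6*n. GG n (2*pi*real k / real (6*n) - c)) = 9 * real n"
proof -
  have "(2*pi / real (6*n)) * (\<Sum>k<6*n. GG n (2*pi*real k / real (6*n) + (-c))) = II (\<lambda>t. GG n (t + (-c)))"
    by (rule quadrature[OF GG_tp]) (use assms in auto)
  then have "(2*pi / real (6*n)) * (\<Sum>k<6*n. GG n (2*pi*real k / real (6*n) - c)) = 3 * pi"
    using GG_int[of n "-c"] by simp
  then show ?thesis using assms by (simp add: field_simps)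
qed

lemma GG_disc2: assumes "1 \<le> n"
  shows "(\<Sum>k<6*n. GG n (c - 2*pi*real k / real (6*n))) = 9 * real n"
proof -
  have "GG n (c - 2*pi*real k / real (6*n)) = GG n (2*pi*real k / real (6*n) - c)" for k
    using GG_even[of n "2*pi*real k / real (6*n) - c"] by simp
  then show ?thesis using GG_disc[OF assms] by simp
qed

lemma K_le_GG: "1 \<le> n \<Longrightarrow> \<bar>VP_kernel n x\<bar> \<le> GG n x"
  unfolding GG_def by (rule K_bound)

lemma VP_cont: "continuous_on A (VP_means n f)"
proof -
  have "continuous_on A (\<lambda>\<phi>. 1 / (3 * real n) *
     (\<Sum>k=0..6*n-1. f (pi * real k / (3 * real n)) * VP_kernel n (\<phi> - pi * real k / (3 * real n))))"
    unfolding VP_kernel_def by (intro continuous_intros)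
  then show ?thesis unfolding VP_means_def[abs_def] .
qed



lemma GG_cont[continuous_intros]: fixes h :: "real \<Rightarrow> real" assumes "continuous_on A h" shows "continuous_on A (\<lambda>x. GG n (h x))"
proof -
  have c: "continuous_on A (\<lambda>x. cos (real k * h x))" for k
    by (rule continuous_on_cos, rule continuous_on_mult[OF continuous_on_const assms])
  show ?thesis unfolding GG_def Fj_def by (intro continuous_intros c)
qed

lemma main_est:
  fixes f q Q :: "real \<Rightarrow> real"
  assumes p: "1 \<le> p" and n: "1 \<le> n" and fm: "f \<in> borel_measurable borel"
    and q: "q \<in> tp (n+1)" and Q: "Q \<in> tp (n+1)" and le1: "\<And>x. q x \<le> f x" and le2: "\<And>x. f x \<le> Q x"
  shows "II (\<lambda>x. \<bar>f x - VP_means n f x\<bar> powr p)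
     \<le> (2 powr (p-1) * (1 + 3 powr (p-1) * 3 powr (p-1) * 9)) * II (\<lambda>x. \<bar>Q x - q x\<bar> powr p)"
proof -
  define N where "N = 6*n"
  define tk where "tk k = 2*pi*real k / real N" for k
  define T where "T x = Q x - q x" for x
  define S where "S \<phi> = (1/(3*real n)) * (\<Sum>k<N. T (tk k) * GG n (\<phi> - tk k))" for \<phi>
  define g where "g x = f x - q x" for x
  have Ttp: "T \<in> tp (n+1)" unfolding T_def[abs_def] by (rule tp_diff[OF Q q])
  have T0: "0 \<le> T x" for x using le1[of x] le2[of x] by (simp add: T_def)
  have g0: "0 \<le> g x" "g x \<le> T x" for x using le1[of x] le2[of x] by (auto simp: g_def T_def)
  have Tc: "continuous_on A T" for A by (rule tp_cont[OF Ttp])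
  have Sc: "continuous_on A S" for A unfolding S_def[abs_def] by (intro continuous_intros)
  have GG0: "0 \<le> GG n x" for x by (rule GG_nonneg[OF n])
  have S0: "0 \<le> S \<phi>" for \<phi> unfolding S_def using T0 GG0 by (intro mult_nonneg_nonneg sum_nonneg) auto
  have p0: "0 < p" using p by simp
  have Tpc: "continuous_on A (\<lambda>x. T x powr p)" for A
    by (rule continuous_on_powr') (use Tc T0 p0 in auto)
  have Spc: "continuous_on A (\<lambda>x. S x powr p)" for A
    by (rule continuous_on_powr') (use Sc S0 p0 in auto)
  have iTp: "set_integrable lborel {0..2*pi} (\<lambda>x. T x powr p)" by (rule cont_si[OF Tpc])
  have iSp: "set_integrable lborel {0..2*pi} (\<lambda>x. S x powr p)" by (rule cont_si[OF Spc])
  have nodes: "(\<Sum>k=0..6*n-1. F (pi * real k / (3 * real n))) = (\<Sum>k<N. F (tk k))" for F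
    unfolding N_def tk_def by (rule sum_nodes[OF n])
  have Vsplit: "VP_means n f \<phi> = VP_means n g \<phi> + q \<phi>" for \<phi>
  proof -
    have "VP_means n g \<phi> = VP_means n f \<phi> - VP_means n q \<phi>"
      unfolding VP_means_def g_def by (simp add: left_diff_distrib sum_subtractf right_diff_distrib)
    then show ?thesis using VP_reproduces[OF q n, of \<phi>] by simp
  qed
  have Vg: "\<bar>VP_means n g \<phi>\<bar> \<le> S \<phi>" for \<phi>
  proof -
    have "VP_means n g \<phi> = 1 / (3 * real n) * (\<Sum>k<N. g (tk k) * VP_kernel n (\<phi> - tk k))"
      unfolding VP_means_def using nodes[of "\<lambda>t. g t * VP_kernel n (\<phi> - t)"] by simp
    also have "\<bar>\<dots>\<bar> \<le> 1 / (3 * real n) * (\<Sum>k<N. \<bar>g (tk k) * VP_kernel n (\<phi> - tk k)\<bar>)"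
      using sum_abs[of "\<lambda>k. g (tk k) * VP_kernel n (\<phi> - tk k)" "{..<N}"]
      by (simp add: abs_mult divide_right_mono)
    also have "\<dots> \<le> 1 / (3 * real n) * (\<Sum>k<N. T (tk k) * GG n (\<phi> - tk k))"
      using g0 K_le_GG[OF n] T0
      by (intro mult_left_mono sum_mono) (auto simp: abs_mult intro!: mult_mono)
    finally show ?thesis unfolding S_def .
  qed
  have fV: "\<bar>f \<phi> - VP_means n f \<phi>\<bar> \<le> T \<phi> + S \<phi>" for \<phi>
  proof -
    have "f \<phi> - VP_means n f \<phi> = g \<phi> - VP_means n g \<phi>" using Vsplit[of \<phi>] by (simp add: g_def)
    then show ?thesis using Vg[of \<phi>] g0[of \<phi>] by linarith
  qed
  have pw2: "(T \<phi> + S \<phi>) powr p \<le> 2 powr (p-1) * (T \<phi> powr p + S \<phi> powr p)" for \<phi>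
    using jensen_sum[of "{0::nat,1}" "\<lambda>_. 1" "\<lambda>i. if i = 0 then T \<phi> else S \<phi>" 2 p] T0 S0 p
    by simp
  have Sp: "S \<phi> powr p \<le> 3 powr (p-1) * ((1/(3*real n)) * (\<Sum>k<N. GG n (\<phi> - tk k) * T (tk k) powr p))" for \<phi>
  proof -
    have W: "(\<Sum>k<N. GG n (\<phi> - tk k) / (3*real n)) = 3"
      using GG_disc2[OF n, of \<phi>] n unfolding tk_def N_def by (simp add: sum_divide_distrib[symmetric])
    have "(\<Sum>k<N. GG n (\<phi> - tk k)/(3*real n) * T (tk k)) powr p \<le> 3 powr (p-1) * (\<Sum>k<N. GG n (\<phi> - tk k)/(3*real n) * T (tk k) powr p)"
      by (rule jensen_sum[OF _ _ _ W]) (use GG0 T0 p n in auto)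
    moreover have "(\<Sum>k<N. GG n (\<phi> - tk k)/(3*real n) * T (tk k)) = S \<phi>"
      unfolding S_def by (simp add: sum_divide_distrib algebra_simps)
    moreover have "(\<Sum>k<N. GG n (\<phi> - tk k)/(3*real n) * T (tk k) powr p) = (1/(3*real n)) * (\<Sum>k<N. GG n (\<phi> - tk k) * T (tk k) powr p)"
      by (simp add: sum_divide_distrib)
    ultimately show ?thesis by simp
  qed
  have ISp: "II (\<lambda>\<phi>. S \<phi> powr p) \<le> 3 powr (p-1) * ((1/(3*real n)) * ((\<Sum>k<N. T (tk k) powr p) * (3*pi)))"
  proof -
    let ?R = "\<lambda>\<phi>. 3 powr (p-1) * ((1/(3*real n)) * (\<Sum>k<N. GG n (\<phi> - tk k) * T (tk k) powr p))"
    have iR: "set_integrable lborel {0..2*pi} ?R" by (intro cont_si continuous_intros)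
    have "II (\<lambda>\<phi>. S \<phi> powr p) \<le> II ?R" by (rule set_integral_mono[OF iSp iR Sp])
    also have "II ?R = 3 powr (p-1) * ((1/(3*real n)) * II (\<lambda>\<phi>. \<Sum>k<N. GG n (\<phi> - tk k) * T (tk k) powr p))"
      by simp
    also have "II (\<lambda>\<phi>. \<Sum>k<N. GG n (\<phi> - tk k) * T (tk k) powr p) = (\<Sum>k<N. II (\<lambda>\<phi>. GG n (\<phi> - tk k) * T (tk k) powr p))"
      by (rule LINT_sum(1)) (auto intro!: cont_si continuous_intros)
    also have "\<dots> = (\<Sum>k<N. T (tk k) powr p * (3*pi))"
      by (rule sum.cong) (auto simp: GG_int2)
    also have "\<dots> = (\<Sum>k<N. T (tk k) powr p) * (3*pi)" by (simp add: sum_distrib_right)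
    finally show ?thesis .
  qed
  have Tk: "T (tk k) powr p \<le> 3 powr (p-1) * II (\<lambda>y. GG n (tk k - y) / pi * T y powr p)" for k
  proof -
    have rp: "II (\<lambda>y. T y * VP_kernel n (tk k - y)) = pi * T (tk k)" by (rule repro[OF Ttp _ n]) simp
    have i1: "set_integrable lborel {0..2*pi} (\<lambda>y. T y * VP_kernel n (tk k - y))"
      by (rule tp_si[OF tp_mult[OF Ttp VP_diff_tp[OF n]]])
    have i2: "set_integrable lborel {0..2*pi} (\<lambda>y. GG n (tk k - y) * T y)"
      by (intro cont_si continuous_intros Tc)
    have "II (\<lambda>y. T y * VP_kernel n (tk k - y)) \<le> II (\<lambda>y. GG n (tk k - y) * T y)"
    proof (rule set_integral_mono[OF i1 i2])
      fix y
      have "T y * VP_kernel n (tk k - y) \<le> T y * GG n (tk k - y)"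
        by (rule mult_left_mono[OF _ T0]) (use K_le_GG[OF n, of "tk k - y"] in linarith)
      then show "T y * VP_kernel n (tk k - y) \<le> GG n (tk k - y) * T y" by (simp add: mult.commute)
    qed
    moreover have "(\<lambda>y. GG n (tk k - y) / pi * T y) = (\<lambda>y. (GG n (tk k - y) * T y) / pi)" by auto
    ultimately have le: "T (tk k) \<le> II (\<lambda>y. GG n (tk k - y) / pi * T y)"
      using rp by (simp add: field_simps)
    have W: "II (\<lambda>y. GG n (tk k - y) / pi) = 3" using GG_int3[of n "tk k"] by simp
    have J: "(II (\<lambda>y. GG n (tk k - y) / pi * T y)) powr p \<le> 3 powr (p-1) * II (\<lambda>y. GG n (tk k - y) / pi * T y powr p)"
      by (rule jensen_int[OF _ _ _ _ _ W]) (use GG0 T0 p in \<open>auto intro!: cont_si continuous_intros Tc Tpc\<close>)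
    have "T (tk k) powr p \<le> (II (\<lambda>y. GG n (tk k - y) / pi * T y)) powr p"
      by (rule powr_mono2) (use p T0 le in auto)
    then show ?thesis using J by linarith
  qed
  have sumT: "(\<Sum>k<N. T (tk k) powr p) \<le> 3 powr (p-1) * (9 * real n / pi * II (\<lambda>y. T y powr p))"
  proof -
    have "(\<Sum>k<N. T (tk k) powr p) \<le> (\<Sum>k<N. 3 powr (p-1) * II (\<lambda>y. GG n (tk k - y) / pi * T y powr p))"
      by (rule sum_mono) (rule Tk)
    also have "\<dots> = 3 powr (p-1) * (\<Sum>k<N. II (\<lambda>y. GG n (tk k - y) / pi * T y powr p))"
      by (simp add: sum_distrib_left)
    also have "(\<Sum>k<N. II (\<lambda>y. GG n (tk k - y) / pi * T y powr p)) = II (\<lambda>y. \<Sum>k<N. GG n (tk k - y) / pi * T y powr p)"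
      by (rule LINT_sum(1)[symmetric]) (auto intro!: cont_si continuous_intros Tpc)
    also have "(\<lambda>y. \<Sum>k<N. GG n (tk k - y) / pi * T y powr p) = (\<lambda>y. (9 * real n / pi) * T y powr p)"
    proof
      fix y
      have "(\<Sum>k<N. GG n (tk k - y) / pi * T y powr p) = (\<Sum>k<N. GG n (tk k - y)) / pi * T y powr p"
        by (simp add: sum_distrib_right sum_divide_distrib)
      also have "(\<Sum>k<N. GG n (tk k - y)) = 9 * real n"
        using GG_disc[OF n, of y] unfolding tk_def N_def by simp
      finally show "(\<Sum>k<N. GG n (tk k - y) / pi * T y powr p) = (9 * real n / pi) * T y powr p" by simp
    qed
    also have "II (\<lambda>y. (9 * real n / pi) * T y powr p) = 9 * real n / pi * II (\<lambda>y. T y powr p)"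
      by simp
    finally show ?thesis .
  qed
  have ISp2: "II (\<lambda>\<phi>. S \<phi> powr p) \<le> 3 powr (p-1) * 3 powr (p-1) * 9 * II (\<lambda>y. T y powr p)"
  proof -
    have "3 powr (p-1) * ((1/(3*real n)) * ((\<Sum>k<N. T (tk k) powr p) * (3*pi)))
        = (3 powr (p-1) * pi / real n) * (\<Sum>k<N. T (tk k) powr p)" by (simp add: field_simps)
    also have "\<dots> \<le> (3 powr (p-1) * pi / real n) * (3 powr (p-1) * (9 * real n / pi * II (\<lambda>y. T y powr p)))"
      by (rule mult_left_mono[OF sumT]) simp
    also have "\<dots> = 3 powr (p-1) * 3 powr (p-1) * 9 * II (\<lambda>y. T y powr p)"
      using n by (simp add: field_simps)
    finally show ?thesis using ISp by linarith
  qed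
  have Vm: "VP_means n f \<in> borel_measurable borel"
    by (rule borel_measurable_continuous_onI[OF VP_cont])
  have TSc: "continuous_on {0..2*pi} (\<lambda>x. (T x + S x) powr p)"
    by (rule continuous_on_powr') (use Tc Sc T0 S0 p0 in \<open>auto intro!: continuous_intros\<close>)
  have iF: "set_integrable lborel {0..2*pi} (\<lambda>x. \<bar>f x - VP_means n f x\<bar> powr p)"
  proof (rule si_dom[OF _ TSc])
    show "(\<lambda>x. \<bar>f x - VP_means n f x\<bar> powr p) \<in> borel_measurable borel"
      using fm Vm by measurable
    fix x
    show "\<bar>\<bar>f x - VP_means n f x\<bar> powr p\<bar> \<le> (T x + S x) powr p"
      using powr_mono2[of p "\<bar>f x - VP_means n f x\<bar>" "T x + S x"] fV[of x] p by simp
  qed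
  have iTS: "set_integrable lborel {0..2*pi} (\<lambda>x. 2 powr (p-1) * (T x powr p + S x powr p))"
    using iTp iSp by (intro set_integrable_mult_right set_integral_add(1)) auto
  have "II (\<lambda>x. \<bar>f x - VP_means n f x\<bar> powr p) \<le> II (\<lambda>x. 2 powr (p-1) * (T x powr p + S x powr p))"
  proof (rule set_integral_mono[OF iF iTS])
    fix x
    have "\<bar>f x - VP_means n f x\<bar> powr p \<le> (T x + S x) powr p"
      using powr_mono2[of p "\<bar>f x - VP_means n f x\<bar>" "T x + S x"] fV[of x] p by simp
    then show "\<bar>f x - VP_means n f x\<bar> powr p \<le> 2 powr (p-1) * (T x powr p + S x powr p)"
      using pw2[of x] by linarith
  qed
  also have "\<dots> = 2 powr (p-1) * (II (\<lambda>x. T x powr p) + II (\<lambda>x. S x powr p))"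
    using iTp iSp by simp
  also have "\<dots> \<le> 2 powr (p-1) * (II (\<lambda>x. T x powr p) + 3 powr (p-1) * 3 powr (p-1) * 9 * II (\<lambda>y. T y powr p))"
    using ISp2 by (intro mult_left_mono) auto
  also have "\<dots> = (2 powr (p-1) * (1 + 3 powr (p-1) * 3 powr (p-1) * 9)) * II (\<lambda>x. T x powr p)"
    by (simp add: algebra_simps)
  also have "(\<lambda>x. T x powr p) = (\<lambda>x. \<bar>Q x - q x\<bar> powr p)"
    using T0 by (auto simp: T_def)
  finally show ?thesis .
qed

lemma trig_tp: assumes "q \<in> trig_polys n" shows "q \<in> tp (n+1)"
proof -
  obtain a b where q: "q = (\<lambda>x. a 0 + (\<Sum>k=1..n. a k * cos (real k * x) + b k * sin (real k * x)))"
    using assms unfolding trig_polys_def by blast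
  have s: "sin (real k * x) = cos (real k * x + (-pi/2))" for k x
    by (simp add: cos_diff)
  have "(\<lambda>x. a 0 + (\<Sum>k\<in>{1..n}. a k * cos (real k * x + 0) + b k * cos (real k * x + (-pi/2)))) \<in> tp (n+1)"
    by (intro tp_add tp_const tp_sum tp_cos) auto
  then show ?thesis unfolding q s by simp
qed

lemma II_nonneg: "(\<And>x. 0 \<le> h x) \<Longrightarrow> 0 \<le> II h"
  unfolding set_lebesgue_integral_def by (rule Bochner_Integration.integral_nonneg) (simp add: indicator_def)

theorem lemma5p7:
  fixes p :: real
  assumes "1 \<le> p"
  shows "\<exists>C. \<forall>f \<in> B_T. \<forall>n::nat. n \<ge> 1 \<longrightarrow>
           Lp_norm p (\<lambda>x. f x - VP_means n f x) \<le> C * one_sided_E p f n"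
proof -
  define D where "D = 2 powr (p-1) * (1 + 3 powr (p-1) * 3 powr (p-1) * 9)"
  define C where "C = D powr (1/p)"
  have D0: "0 < D" unfolding D_def by (intro mult_pos_pos add_pos_nonneg) auto
  have C0: "0 < C" unfolding C_def using D0 by simp
  have p0: "0 < p" using assms by simp
  show ?thesis
  proof (intro exI[of _ C] ballI allI impI)
    fix f n assume f: "f \<in> B_T" and n: "1 \<le> (n::nat)"
    have fm: "f \<in> borel_measurable borel" and fb: "bounded (range f)" using f unfolding B_T_def by auto
    obtain B where B: "\<And>x. \<bar>f x\<bar> \<le> B" using fb unfolding bounded_real by auto
    define E where "E = {Lp_norm p (\<lambda>x. Q x - q x) | q Q.
      q \<in> trig_polys n \<and> Q \<in> trig_polys n \<and> (\<forall>x. q x \<le> f x \<and> f x \<le> Q x)}"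
    have bnd: "Lp_norm p (\<lambda>x. f x - VP_means n f x) \<le> C * e" if "e \<in> E" for e
    proof -
      obtain q Q where e: "e = Lp_norm p (\<lambda>x. Q x - q x)" and q: "q \<in> trig_polys n" and Q: "Q \<in> trig_polys n"
        and le: "\<And>x. q x \<le> f x" "\<And>x. f x \<le> Q x"
        using \<open>e \<in> E\<close> unfolding E_def by blast
      have M: "II (\<lambda>x. \<bar>f x - VP_means n f x\<bar> powr p) \<le> D * II (\<lambda>x. \<bar>Q x - q x\<bar> powr p)"
        unfolding D_def by (rule main_est[OF assms n fm trig_tp[OF q] trig_tp[OF Q] le])
      have z1: "0 \<le> II (\<lambda>x. \<bar>f x - VP_means n f x\<bar> powr p)" by (rule II_nonneg) simp
      have z2: "0 \<le> II (\<lambda>x. \<bar>Q x - q x\<bar> powr p)" by (rule II_nonneg) simp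
      have "Lp_norm p (\<lambda>x. f x - VP_means n f x) = II (\<lambda>x. \<bar>f x - VP_means n f x\<bar> powr p) powr (1/p)"
        unfolding Lp_norm_def ..
      also have "\<dots> \<le> (D * II (\<lambda>x. \<bar>Q x - q x\<bar> powr p)) powr (1/p)"
        by (rule powr_mono2) (use M z1 p0 in auto)
      also have "\<dots> = C * e"
        unfolding C_def e Lp_norm_def using D0 z2 by (simp add: powr_mult)
      finally show ?thesis .
    qed
    have ne: "E \<noteq> {}"
    proof -
      have cq: "(\<lambda>x. c) \<in> trig_polys n" for c :: real
        unfolding trig_polys_def
        by (rule CollectI, rule exI[of _ "\<lambda>k. if k = 0 then c else 0"], rule exI[of _ "\<lambda>_. 0"]) auto
      have "\<forall>x. (\<lambda>x. -B) x \<le> f x \<and> f x \<le> (\<lambda>x. B) x" using B by (metis abs_le_iff minus_le_iff)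
      then have "Lp_norm p (\<lambda>x. (\<lambda>x. B) x - (\<lambda>x. -B) x) \<in> E"
        unfolding E_def using cq[of "-B"] cq[of B]
        by (intro CollectI exI[of _ "\<lambda>x. -B"] exI[of _ "\<lambda>x. B"]) simp
      then show ?thesis by blast
    qed
    have "Lp_norm p (\<lambda>x. f x - VP_means n f x) / C \<le> Inf E"
      by (rule cInf_greatest[OF ne]) (use bnd C0 in \<open>auto simp: field_simps mult.commute\<close>)
    then show "Lp_norm p (\<lambda>x. f x - VP_means n f x) \<le> C * one_sided_E p f n"
      unfolding one_sided_E_def E_def[symmetric] using C0 by (simp add: field_simps)
  qed
qed

end
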